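(* Let $n$ be a positive integer. Let $U_n\subseteq T_n$ be the set of triples $(A,B,C)\in T_n$ such that $C$ has at least one point strictly above the horizontal axis and either $B$ ends with a down step or $B$ is empty. Let $D_n^+\subseteq D_n$ be the set of pairs $(H,X)\in D_n$ in which $X$ is strictly above the horizontal axis. Define $s:U_n\to D_n^+$ as follows: for $(A,B,C)\in U_n$, let $K$ be the leftmost point of $C$ of maximal height, let $K$ cut $C$ into a left part $C_1$ and a right part $C_2$, and set $s(A,B,C)=(H,X)$, where $H$ is the concatenation of $C_1$, $A$, $B$, $C_2$ (in this order) and $X$ is the point of $H$ where $A$ ends and $B$ begins. Then $s$ is a bijection from $U_n$ onto $D_n^+$.
   Context: A lattice path here is a finite (possibly empty) sequence of steps, each an up step $(1,1)$ or a down step $(1,-1)$, drawn as a polygonal line from a given starting lattice point; its lattice points are its starting point and the endpoints of its steps; the height of a point is its vertical coordinate. $T_n$ is the set of ordered triples $(A,B,C)$ of lattice paths such that for some nonnegative integers $i,j,k$ with $i+j+k=n$, $A$ has $i$ up and $i$ down steps, $B$ has $j$ up and $j$ down steps, and $C$ has $k$ up and $k$ down steps; each of $A,B,C$ is regarded as drawn starting (and hence ending) on the horizontal axis, and statements about heights of points of $C$ or of $C$ being above/below the axis refer to this drawing. $D_n$ is the set of pairs $(H,X)$ where $H$ is a lattice path with $n$ up steps and $n$ down steps drawn from $(0,0)$ to $(2n,0)$ and $X$ is one of the $2n+1$ lattice points of $H$. Concatenation of paths means drawing them successively, each starting at the endpoint of the preceding one, the first starting at $(0,0)$. *)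

theory Defs
  imports Main
begin

text \<open>A lattice path is a list of steps: True = up step (1,1), False = down step (1,-1).
  Drawn from the origin, its lattice points are (k, height p k) for k \<le> length p.\<close>

type_synonym path = "bool list"

definition step_val :: "bool \<Rightarrow> int" where
  "step_val b = (if b then 1 else -1)"

definition height :: "path \<Rightarrow> nat \<Rightarrow> int" where
  "height p k = sum_list (map step_val (take k p))"

definition ups :: "path \<Rightarrow> nat" where
  "ups p = length (filter (\<lambda>b. b) p)"

definition downs :: "path \<Rightarrow> nat" where
  "downs p = length (filter (\<lambda>b. \<not> b) p)"

definition points :: "path \<Rightarrow> (int \<times> int) set" where
  "points p = {(int k, height p k) | k. k \<le> length p}"

definition T :: "nat \<Rightarrow> (path \<times> path \<times> path) set" where
  "T n = {(A, B, C). \<exists>i j k. i + j + k = n \<and>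
            ups A = i \<and> downs A = i \<and> ups B = j \<and> downs B = j \<and> ups C = k \<and> downs C = k}"

definition D :: "nat \<Rightarrow> (path \<times> (int \<times> int)) set" where
  "D n = {(H, X). ups H = n \<and> downs H = n \<and> X \<in> points H}"

definition U :: "nat \<Rightarrow> (path \<times> path \<times> path) set" where
  "U n = {(A, B, C) \<in> T n. (\<exists>P \<in> points C. snd P > 0) \<and> (B = [] \<or> last B = False)}"

definition Dplus :: "nat \<Rightarrow> (path \<times> (int \<times> int)) set" where
  "Dplus n = {(H, X) \<in> D n. snd X > 0}"

definition kpos :: "path \<Rightarrow> nat" where
  "kpos C = (LEAST k. k \<le> length C \<and> height C k = Max {height C j | j. j \<le> length C})"

definition s :: "path \<times> path \<times> path \<Rightarrow> path \<times> (int \<times> int)" where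
  "s = (\<lambda>(A, B, C).
     (let m = kpos C; C1 = take m C; C2 = drop m C; H = C1 @ A @ B @ C2;
          x = length C1 + length A
      in (H, (int x, height H x))))"

end

theory Submission
  imports Defs
begin

lemma height_0[simp]: "height p 0 = 0"
  by (simp add: height_def)

lemma height_append:
  "height (u @ v) k = (if k \<le> length u then height u k else height u (length u) + height v (k - length u))"
  by (auto simp: height_def take_append)

lemma height_take: "height (take a p) j = height p (min j a)"
  by (simp add: height_def min_def)

lemma height_drop: "height p (a + j) = height p a + height (drop a p) j"
  by (simp add: height_def take_add)

lemma sum_steps: "sum_list (map step_val p) = int (ups p) - int (downs p)"
  by (induct p) (auto simp: ups_def downs_def step_val_def)

lemma height_end: "height p (length p) = int (ups p) - int (downs p)"
  by (simp add: height_def sum_steps)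

lemma height_beyond: "length p \<le> k \<Longrightarrow> height p k = height p (length p)"
  by (simp add: height_def)

lemma height_Suc: "k < length p \<Longrightarrow> height p (Suc k) = height p k + step_val (p!k)"
  by (simp add: height_def take_Suc_conv_app_nth)

lemma ups_append[simp]: "ups (u @ v) = ups u + ups v"
  by (simp add: ups_def)

lemma downs_append[simp]: "downs (u @ v) = downs u + downs v"
  by (simp add: downs_def)

lemma BC_one:
  assumes "B @ C2 = B' @ C2'" "length B < length B'"
    "height B (length B) = 0" "height B' (length B') = 0" "last B' = False"
    "\<forall>j\<le>length C2. height C2 j \<le> 0"
  shows False
proof -
  define t where "t = length B' - 1"
  have tl: "t < length B'" "length B \<le> t" using assms(2) by (auto simp: t_def)
  have B'ne: "B' \<noteq> []" using assms(2) by auto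
  have "B' ! t = False" using assms(5) B'ne by (simp add: last_conv_nth t_def)
  then have "height B' (Suc t) = height B' t - 1" using height_Suc[OF tl(1)] by (simp add: step_val_def)
  moreover have "Suc t = length B'" using tl by (simp add: t_def)
  ultimately have h1: "height B' t = 1" using assms(4) by simp
  have "height (B' @ C2') t = 1" using h1 tl by (simp add: height_append)
  moreover have "t < length (B @ C2)" using tl assms(1) by (metis length_append trans_less_add1)
  then have "t - length B \<le> length C2" by simp
  then have "height (B @ C2) t \<le> 0" using tl assms(3,6) by (simp add: height_append)
  ultimately show False using assms(1) by simp
qed

lemma C1_one:
  assumes "C1 @ R = C1' @ R'" "length C1 < length C1'"
    "height C1 (length C1) = h" "\<forall>j<length C1'. height C1' j < h"
  shows False
proof -
  have "height (C1 @ R) (length C1) = h" using assms(3) by (simp add: height_append)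
  moreover have "height (C1' @ R') (length C1) < h" using assms(2,4) by (simp add: height_append)
  ultimately show False using assms(1) by simp
qed

lemma kpos_props:
  assumes "\<exists>P \<in> points C. snd P > 0"
  shows "kpos C \<le> length C" "\<forall>j<kpos C. height C j < height C (kpos C)"
    "\<forall>j\<le>length C. height C j \<le> height C (kpos C)" "height C (kpos C) > 0"
proof -
  define S where "S = {height C j | j. j \<le> length C}"
  have S_eq: "S = (\<lambda>j. height C j) ` {..length C}" by (auto simp: S_def)
  have fin: "finite S" "S \<noteq> {}" by (auto simp: S_eq)
  have "Max S \<in> S" using fin by (rule Max_in)
  then obtain k0 where k0: "k0 \<le> length C" "height C k0 = Max S" by (auto simp: S_def)
  have kd: "kpos C = (LEAST k. k \<le> length C \<and> height C k = Max S)" by (simp add: kpos_def S_def)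
  have L: "kpos C \<le> length C \<and> height C (kpos C) = Max S"
    unfolding kd by (rule LeastI[of _ k0]) (use k0 in auto)
  then show "kpos C \<le> length C" by simp
  have le: "\<And>j. j \<le> length C \<Longrightarrow> height C j \<le> Max S"
    using fin by (intro Max_ge) (auto simp: S_def)
  then show "\<forall>j\<le>length C. height C j \<le> height C (kpos C)" using L by simp
  show "\<forall>j<kpos C. height C j < height C (kpos C)"
  proof (intro allI impI)
    fix j assume j: "j < kpos C"
    then have jl: "j \<le> length C" using L by simp
    have "\<not> (j \<le> length C \<and> height C j = Max S)"
      using j unfolding kd using not_less_Least by blast
    then show "height C j < height C (kpos C)" using le[OF jl] jl L by simp
  qed
  from assms obtain P where "P \<in> points C" "snd P > 0" by blast
  then obtain j where "j \<le> length C" "height C j > 0" by (auto simp: points_def)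
  then show "height C (kpos C) > 0" using le L by fastforce
qed

lemma kpos_eq:
  assumes "m \<le> length C" "\<forall>j<m. height C j < height C m"
    "\<forall>j\<le>length C. height C j \<le> height C m"
  shows "kpos C = m"
proof -
  define S where "S = {height C j | j. j \<le> length C}"
  have S_eq: "S = (\<lambda>j. height C j) ` {..length C}" by (auto simp: S_def)
  have "Max S = height C m"
    by (rule Max_eqI) (use assms in \<open>auto simp: S_eq\<close>)
  then have kd: "kpos C = (LEAST k. k \<le> length C \<and> height C k = height C m)"
    by (simp add: kpos_def S_def)
  show ?thesis unfolding kd
    by (rule Least_equality) (use assms in \<open>auto simp: not_le[symmetric]\<close>)
qed

lemma s_eq: "s (A, B, C) = (take (kpos C) C @ A @ B @ drop (kpos C) C,
   (int (length (take (kpos C) C) + length A),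
    height (take (kpos C) C @ A @ B @ drop (kpos C) C) (length (take (kpos C) C) + length A)))"
  by (simp add: s_def Let_def)


lemma U_facts:
  assumes "(A,B,C) \<in> U n"
  defines "m \<equiv> kpos C"
  shows "length (take m C) = m" "\<forall>j<m. height (take m C) j < height C m"
    "height (take m C) m = height C m" "height A (length A) = 0" "height B (length B) = 0"
    "B = [] \<or> last B = False" "\<forall>j \<le> length (drop m C). height (drop m C) j \<le> 0"
    "height C m > 0" "ups A + ups B + ups C = n" "downs A + downs B + downs C = n"
    "height C (length C) = 0" "m \<le> length C"
proof -
  have U: "(A,B,C) \<in> T n" "\<exists>P \<in> points C. snd P > 0" "B = [] \<or> last B = False"
    using assms(1) by (auto simp: U_def)
  note kp = kpos_props[OF U(2), folded m_def]
  show "m \<le> length C" by (rule kp(1))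
  show "length (take m C) = m" using kp(1) by simp
  show "\<forall>j<m. height (take m C) j < height C m" using kp(2) by (simp add: height_take)
  show "height (take m C) m = height C m" by (simp add: height_take)
  from U(1) show "height A (length A) = 0" "height B (length B) = 0" "height C (length C) = 0"
    "ups A + ups B + ups C = n" "downs A + downs B + downs C = n"
    by (auto simp: T_def height_end)
  show "B = [] \<or> last B = False" by (rule U(3))
  show "height C m > 0" by (rule kp(4))
  show "\<forall>j \<le> length (drop m C). height (drop m C) j \<le> 0"
  proof (intro allI impI)
    fix j assume "j \<le> length (drop m C)"
    then have "m + j \<le> length C" using kp(1) by simp
    then have "height C (m + j) \<le> height C m" using kp(3) by simp
    then show "height (drop m C) j \<le> 0" using height_drop[of C m j] by simp
  qed
qed

lemma s_height:
  assumes "(A,B,C) \<in> U n"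
  shows "height (take (kpos C) C @ A @ B @ drop (kpos C) C) (length (take (kpos C) C) + length A)
     = height C (kpos C)"
  using U_facts[OF assms] by (simp add: height_append)

lemma inj_s: "inj_on s (U n)"
proof (rule inj_onI)
  fix a a' assume a: "a \<in> U n" and a': "a' \<in> U n" and eq: "s a = s a'"
  obtain A B C where abc: "a = (A,B,C)" by (cases a) auto
  obtain A' B' C' where abc': "a' = (A',B',C')" by (cases a') auto
  note F = U_facts[OF a[unfolded abc]]
  note F' = U_facts[OF a'[unfolded abc']]
  define m where "m = kpos C"
  define m' where "m' = kpos C'"
  define C1 where "C1 = take m C"
  define C2 where "C2 = drop m C"
  define C1' where "C1' = take m' C'"
  define C2' where "C2' = drop m' C'"
  note F = F[folded m_def, folded C1_def C2_def]
  note F' = F'[folded m'_def, folded C1'_def C2'_def]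
  have hs: "height (C1 @ A @ B @ C2) (length C1 + length A) = height C m"
    using s_height[OF a[unfolded abc]] unfolding C1_def C2_def m_def .
  have hs': "height (C1' @ A' @ B' @ C2') (length C1' + length A') = height C' m'"
    using s_height[OF a'[unfolded abc']] unfolding C1'_def C2'_def m'_def .
  have E: "C1 @ A @ B @ C2 = C1' @ A' @ B' @ C2'" "length C1 + length A = length C1' + length A'"
    using eq unfolding abc abc' s_eq by (simp_all add: C1_def C2_def C1'_def C2'_def m_def m'_def)
  have MM: "height C m = height C' m'" using hs hs' E by simp
  have lC1: "length C1 = length C1'"
  proof (rule linorder_cases[of "length C1" "length C1'"])
    assume "length C1 < length C1'"
    from C1_one[OF E(1) this, of "height C m"] F(1,3) F'(1,2) MM show ?thesis by simp
  next
    assume "length C1' < length C1"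
    from C1_one[OF E(1)[symmetric] this, of "height C m"] F(1,2) F'(1,3) MM show ?thesis by simp
  qed
  then have eC1: "C1 = C1'" and R1: "A @ B @ C2 = A' @ B' @ C2'" using E(1) by (auto simp: append_eq_append_conv)
  then have lA: "length A = length A'" using E(2) lC1 by simp
  then have eA: "A = A'" and R2: "B @ C2 = B' @ C2'" using R1 by (auto simp: append_eq_append_conv)
  have lB: "length B = length B'"
  proof (rule linorder_cases[of "length B" "length B'"])
    assume l: "length B < length B'"
    then have "B' \<noteq> []" by auto
    then show ?thesis using BC_one[OF R2 l] F(5,7) F'(5,6) by auto
  next
    assume l: "length B' < length B"
    then have "B \<noteq> []" by auto
    then show ?thesis using BC_one[OF R2[symmetric] l] F(5,6) F'(5,7) by auto
  qed
  then have eB: "B = B'" and eC2: "C2 = C2'" using R2 by (auto simp: append_eq_append_conv)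
  have "C = C'" using eC1 eC2 unfolding C1_def C2_def C1'_def C2'_def by (metis append_take_drop_id)
  then show "a = a'" using abc abc' eA eB by simp
qed


lemma step_abs: "step_val b = 1 \<or> step_val b = -1"
  by (simp add: step_val_def)

lemma first_hit:
  assumes "h > 0" "height H k = h" "k \<le> length H"
  shows "\<exists>m\<le>k. height H m = h \<and> (\<forall>j<m. height H j < h)"
proof -
  define m where "m = (LEAST j. height H j \<ge> h)"
  have mk: "m \<le> k" unfolding m_def by (rule Least_le) (use assms in simp)
  have mh: "height H m \<ge> h" unfolding m_def by (rule LeastI[of _ k]) (use assms in simp)
  have below: "\<forall>j<m. height H j < h"
    using not_less_Least unfolding m_def by (metis not_le)
  have m0: "m \<noteq> 0" using mh assms(1) by (cases m) auto
  then obtain m1 where m1: "m = Suc m1" by (cases m) auto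
  have "m1 < length H" using mk assms(3) m1 by simp
  then have "height H m = height H m1 + step_val (H!m1)" using m1 height_Suc by simp
  moreover have "height H m1 < h" using below m1 by simp
  ultimately have "height H m = h" using mh step_abs[of "H!m1"] by auto
  then show ?thesis using mk below by blast
qed

lemma last_hit:
  assumes "h > 0" "height H k = h" "k \<le> length H" "height H (length H) = 0"
  shows "\<exists>p. k \<le> p \<and> p \<le> length H \<and> height H p = h \<and>
     (\<forall>j. p \<le> j \<and> j \<le> length H \<longrightarrow> height H j \<le> h) \<and> (p = k \<or> (k < p \<and> H!(p-1) = False))"
proof (cases "\<exists>j. k \<le> j \<and> j \<le> length H \<and> height H j > h")
  case False
  then show ?thesis using assms by (intro exI[of _ k]) (auto simp: not_less)
next
  case True
  define S where "S = {j. k \<le> j \<and> j \<le> length H \<and> height H j > h}"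
  have fin: "finite S" "S \<noteq> {}" using True by (auto simp: S_def)
  define q where "q = Max S"
  have qS: "q \<in> S" unfolding q_def using fin by (rule Max_in)
  have qmax: "\<And>j. j \<in> S \<Longrightarrow> j \<le> q" unfolding q_def using fin by simp
  have q: "k \<le> q" "q \<le> length H" "height H q > h" using qS by (auto simp: S_def)
  have ql: "q < length H" using q assms(1,4) by (cases "q = length H") auto
  have "Suc q \<notin> S" using qmax by fastforce
  then have hq1: "height H (Suc q) \<le> h" using q ql by (auto simp: S_def)
  have st: "height H (Suc q) = height H q + step_val (H!q)" using height_Suc[OF ql] .
  then have "step_val (H!q) = -1" using hq1 q(3) step_abs[of "H!q"] by auto
  then have Hq: "H!q = False" by (cases "H!q") (auto simp: step_val_def)
  have "height H (Suc q) = h" using st hq1 q(3) \<open>step_val (H!q) = -1\<close> by simp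
  moreover have "\<forall>j. Suc q \<le> j \<and> j \<le> length H \<longrightarrow> height H j \<le> h"
  proof (intro allI impI)
    fix j assume j: "Suc q \<le> j \<and> j \<le> length H"
    then have "j \<notin> S" using qmax by fastforce
    then show "height H j \<le> h" using j q by (auto simp: S_def)
  qed
  ultimately show ?thesis using q ql Hq by (intro exI[of _ "Suc q"]) auto
qed

lemma s_into:
  assumes "a \<in> U n"
  shows "s a \<in> Dplus n"
proof -
  obtain A B C where abc: "a = (A,B,C)" by (cases a) auto
  note F = U_facts[OF assms[unfolded abc]]
  have hs: "height (take (kpos C) C @ A @ B @ drop (kpos C) C) (length (take (kpos C) C) + length A)
     = height C (kpos C)" using s_height[OF assms[unfolded abc]] .
  have uC: "ups (take (kpos C) C) + ups (drop (kpos C) C) = ups C"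
    by (metis append_take_drop_id ups_append)
  have dC: "downs (take (kpos C) C) + downs (drop (kpos C) C) = downs C"
    by (metis append_take_drop_id downs_append)
  show ?thesis unfolding abc s_eq Dplus_def D_def points_def
    using F(8,9,10) uC dC hs by (auto intro!: exI[of _ "length (take (kpos C) C) + length A"])
qed


lemma s_onto:
  assumes "(H, X) \<in> Dplus n"
  shows "\<exists>a \<in> U n. s a = (H, X)"
proof -
  from assms obtain k where X: "X = (int k, height H k)" and kl: "k \<le> length H"
    and hpos: "height H k > 0" and uH: "ups H = n" and dH: "downs H = n"
    by (auto simp: Dplus_def D_def points_def)
  define h where "h = height H k"
  have hend: "height H (length H) = 0" using uH dH by (simp add: height_end)
  obtain m where m: "m \<le> k" "height H m = h" "\<forall>j<m. height H j < h"
    using first_hit[OF hpos[folded h_def] h_def[symmetric] kl] by blast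
  obtain p where p: "k \<le> p" "p \<le> length H" "height H p = h"
    "\<forall>j. p \<le> j \<and> j \<le> length H \<longrightarrow> height H j \<le> h" "p = k \<or> (k < p \<and> H!(p-1) = False)"
    using last_hit[OF hpos[folded h_def] h_def[symmetric] kl hend] by blast
  define C1 where "C1 = take m H"
  define A where "A = drop m (take k H)"
  define B where "B = drop k (take p H)"
  define C2 where "C2 = drop p H"
  define C where "C = C1 @ C2"
  have e1: "C1 @ A = take k H" unfolding C1_def A_def using m(1)
    by (metis append_take_drop_id min.absorb1 take_take)
  have e2: "take k H @ B = take p H" unfolding B_def using p(1)
    by (metis append_take_drop_id min.absorb1 take_take)
  have HH: "C1 @ A @ B @ C2 = H" using e1 e2 unfolding C2_def
    by (metis append_assoc append_take_drop_id)
  have lens: "length C1 = m" "length A = k - m" "length B = p - k" "length C2 = length H - p"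
    using m(1) p(1,2) kl by (auto simp: C1_def A_def B_def C2_def)
  have hA: "height A (length A) = 0"
    using height_drop[of "take k H" m "k - m"] m(1,2) lens(2) unfolding A_def h_def
    by (simp add: height_take min_def)
  have hB: "height B (length B) = 0"
    using height_drop[of "take p H" k "p - k"] p(1,3) lens(3) unfolding B_def h_def
    by (simp add: height_take min_def)
  have hC1: "\<And>j. j \<le> m \<Longrightarrow> height C1 j = height H j"
    unfolding C1_def by (simp add: height_take min_def)
  have hC2: "\<And>j. height C2 j = height H (p + j) - h"
    using height_drop[of H p] p(3) unfolding C2_def by simp
  have lC: "length C = m + (length H - p)" using lens by (simp add: C_def)
  have hCm: "height C m = h" using hC1[of m] m(2) lens(1) by (simp add: C_def height_append)
  have hC: "height C (length C) = 0"
  proof -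
    have "p < length H" using p(2,3) hend hpos unfolding h_def by (cases "p = length H") auto
    then show ?thesis
      using lens hC1[of m] m(2) hC2[of "length H - p"] p(2) hend by (simp add: C_def height_append)
  qed
  have kp: "kpos C = m"
  proof (rule kpos_eq)
    show "m \<le> length C" using lC by simp
    show "\<forall>j<m. height C j < height C m" using hC1 m(3) lens(1) hCm
      by (simp add: C_def height_append)
    show "\<forall>j\<le>length C. height C j \<le> height C m"
    proof (intro allI impI)
      fix j assume j: "j \<le> length C"
      show "height C j \<le> height C m"
      proof (cases "j \<le> m")
        case True
        then show ?thesis using hC1[of j] m(2,3) lens(1) hCm
          by (cases "j = m") (auto simp: C_def height_append less_imp_le)
      next
        case False
        then have "height C j = h + height C2 (j - m)" using hC1[of m] m(2) lens(1)
          by (simp add: C_def height_append)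
        also have "\<dots> = height H (p + (j - m))" using hC2 by simp
        also have "\<dots> \<le> h" using p(4)[rule_format, of "p + (j - m)"] j lC False p(2) by (simp, linarith)
        finally show ?thesis using hCm by simp
      qed
    qed
  qed
  have tC: "take m C = C1" "drop m C = C2" using lens(1) by (simp_all add: C_def)
  have sv: "s (A, B, C) = (H, X)"
    unfolding s_eq kp tC HH X using lens(1,2) m(1) by simp
  have uCC: "ups C + ups A + ups B = n" "downs C + downs A + downs B = n"
    using uH dH HH[symmetric] by (auto simp: C_def)
  have bal: "ups A = downs A" "ups B = downs B" "ups C = downs C"
    using hA hB hC by (simp_all add: height_end)
  have inT: "(A, B, C) \<in> T n" unfolding T_def
    using uCC bal by (auto intro!: exI[of _ "ups A"] exI[of _ "ups B"] exI[of _ "ups C"])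
  have pt: "\<exists>P \<in> points C. snd P > 0"
  proof -
    have "(int m, height C m) \<in> points C" using lC unfolding points_def by auto
    then show ?thesis using hCm hpos unfolding h_def by force
  qed
  have lastB: "B = [] \<or> last B = False"
    using p(5)
  proof
    assume "p = k" then show ?thesis by (simp add: B_def)
  next
    assume a: "k < p \<and> H!(p-1) = False"
    then have "B \<noteq> []" using lens(3) by auto
    then have "last B = B ! (p - k - 1)" using lens(3) by (simp add: last_conv_nth)
    also have "\<dots> = H ! (p - 1)" using a p(2) unfolding B_def by simp
    finally show ?thesis using a by simp
  qed
  have "(A, B, C) \<in> U n" unfolding U_def using inT pt lastB by simp
  then show ?thesis using sv by blast
qed

theorem lemma2:
  fixes n :: nat
  assumes "n > 0"
  shows "bij_betw s (U n) (Dplus n)"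
proof (rule bij_betw_imageI)
  show "inj_on s (U n)" by (rule inj_s)
  show "s ` U n = Dplus n"
  proof
    show "s ` U n \<subseteq> Dplus n" using s_into by blast
    show "Dplus n \<subseteq> s ` U n"
    proof
      fix y assume "y \<in> Dplus n"
      then obtain H X where y: "y = (H, X)" "(H, X) \<in> Dplus n" by (cases y) auto
      then show "y \<in> s ` U n" using s_onto[OF y(2)] by force
    qed
  qed
qed

end
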